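(* Let $G=(V,E,\omega)$ be a graph and let $S_m\in st(G)$. If $S_m\subseteq S_{m-1}\subseteq\dots\subseteq S_1\subseteq V$, then $S_1,\dots,S_{m-1},S_m$ induces a sequence of reductions on $G$, and $\mathcal{R}(G;S_1,\dots,S_{m-1},S_m)=\mathcal{R}_{S_m}(G)$.
   Context: Let $\mathbb{W}$ be the field of rational functions $p(\lambda)/q(\lambda)$ in a complex variable $\lambda$ with $p,q\in\mathbb{C}[\lambda]$, $q\neq 0$. A graph $G=(V,E,\omega)$ is a finite directed graph with vertex set $V=\{v_1,\dots,v_n\}$, edge set $E$ (loops allowed, at most one edge $e_{ij}$ from $v_i$ to $v_j$) and edge weights $\omega:E\to\mathbb{W}\setminus\{0\}$; set $\omega(e_{ij})=0$ if there is no edge from $v_i$ to $v_j$. For $U\subseteq V$, $G|_U$ is the induced subgraph on $U$; $\bar S=V\setminus S$; $\ell(G)$ is $G$ with all loops removed. A path is a sequence $u_1,\dots,u_m$ ($m\ge 2$) of distinct vertices with an edge from $u_k$ to $u_{k+1}$ for each $k$; a cycle is such a sequence with $u_1=u_m$ and $u_1,\dots,u_{m-1}$ distinct; $u_2,\dots,u_{m-1}$ are the interior vertices. A nonempty $S\subseteq V$ is a structural set of $G$ if $\ell(G)|_{\bar S}$ contains no cycles and $\omega(e_{ii})\neq\lambda$ (as elements of $\mathbb{W}$) for every $v_i\in\bar S$; $st(G)$ is the set of structural sets. For $S\in st(G)$ and $v_i,v_j\in S$, $\mathcal{B}_{ij}(G;S)$ is the set of paths or cycles from $v_i$ to $v_j$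 with no interior vertex in $S$. For $\beta=u_1,\dots,u_m$ the branch product is $\mathcal{P}_\omega(\beta)=\omega(u_1u_2)\prod_{k=2}^{m-1}\frac{\omega(u_ku_{k+1})}{\lambda-\omega(u_ku_k)}$ ($=\omega(u_1u_2)$ if $m=2$), $\omega(uu')$ being the weight of the edge from $u$ to $u'$. The isospectral reduction $\mathcal{R}_S(G)$ is the graph with vertex set $S$, an edge from $v_i$ to $v_j$ iff $\mathcal{B}_{ij}(G;S)\neq\emptyset$, of weight $\sum_{\beta\in\mathcal{B}_{ij}(G;S)}\mathcal{P}_\omega(\beta)$. Sets $S_m\subseteq\dots\subseteq S_1\subseteq V$ induce a sequence of reductions on $G$ if $S_1\in st(G)$ and, setting $\mathcal{R}_1(G)=\mathcal{R}_{S_1}(G)$, for each $1\le i\le m-1$ one has $S_{i+1}\in st(\mathcal{R}_i(G))$, with $\mathcal{R}_{i+1}(G)=\mathcal{R}_{S_{i+1}}(\mathcal{R}_i(G))$; then $\mathcal{R}(G;S_1,\dots,S_m)=\mathcal{R}_m(G)$, and $S_m$ is the final vertex set. *)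

theory Defs
  imports "HOL-Computational_Algebra.Polynomial" "HOL-Computational_Algebra.Fraction_Field"
begin

type_synonym W = "complex poly fract"

definition lam :: W where
  "lam = Fract [:0, 1:] 1"

record 'v wgraph =
  verts :: "'v set"
  arcs  :: "('v \<times> 'v) set"
  wt    :: "'v \<Rightarrow> 'v \<Rightarrow> W"

definition wf_graph :: "'v wgraph \<Rightarrow> bool" where
  "wf_graph G \<longleftrightarrow> finite (verts G) \<and> arcs G \<subseteq> verts G \<times> verts G
     \<and> (\<forall>i j. (i, j) \<in> arcs G \<longrightarrow> wt G i j \<noteq> 0)
     \<and> (\<forall>i j. (i, j) \<notin> arcs G \<longrightarrow> wt G i j = 0)"

definition induced :: "'v wgraph \<Rightarrow> 'v set \<Rightarrow> 'v wgraph" where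
  "induced G U = \<lparr> verts = verts G \<inter> U, arcs = arcs G \<inter> (U \<times> U),
     wt = (\<lambda>i j. if i \<in> U \<and> j \<in> U then wt G i j else 0) \<rparr>"

definition loopless :: "'v wgraph \<Rightarrow> 'v wgraph" where
  "loopless G = \<lparr> verts = verts G, arcs = {(i, j). (i, j) \<in> arcs G \<and> i \<noteq> j},
     wt = (\<lambda>i j. if i \<noteq> j then wt G i j else 0) \<rparr>"

definition edge_seq :: "'v wgraph \<Rightarrow> 'v list \<Rightarrow> bool" where
  "edge_seq G xs \<longleftrightarrow> set xs \<subseteq> verts G \<and>
     (\<forall>k. Suc k < length xs \<longrightarrow> (xs ! k, xs ! Suc k) \<in> arcs G)"

definition is_path :: "'v wgraph \<Rightarrow> 'v list \<Rightarrow> bool" where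
  "is_path G xs \<longleftrightarrow> length xs \<ge> 2 \<and> distinct xs \<and> edge_seq G xs"

definition is_cycle :: "'v wgraph \<Rightarrow> 'v list \<Rightarrow> bool" where
  "is_cycle G xs \<longleftrightarrow> length xs \<ge> 2 \<and> hd xs = last xs \<and> distinct (butlast xs)
     \<and> edge_seq G xs"

definition structural :: "'v wgraph \<Rightarrow> 'v set \<Rightarrow> bool" where
  "structural G S \<longleftrightarrow> S \<noteq> {} \<and> S \<subseteq> verts G
     \<and> \<not> (\<exists>c. is_cycle (induced (loopless G) (verts G - S)) c)
     \<and> (\<forall>v \<in> verts G - S. wt G v v \<noteq> lam)"

definition st :: "'v wgraph \<Rightarrow> 'v set set" where
  "st G = {S. structural G S}"

definition branches :: "'v wgraph \<Rightarrow> 'v set \<Rightarrow> 'v \<Rightarrow> 'v \<Rightarrow> 'v list set" where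
  "branches G S i j = {\<beta>. (is_path G \<beta> \<or> is_cycle G \<beta>) \<and> hd \<beta> = i \<and> last \<beta> = j
      \<and> (\<forall>k. 0 < k \<and> k < length \<beta> - 1 \<longrightarrow> \<beta> ! k \<notin> S)}"

definition branch_prod :: "'v wgraph \<Rightarrow> 'v list \<Rightarrow> W" where
  "branch_prod G \<beta> = wt G (\<beta> ! 0) (\<beta> ! 1) *
     (\<Prod>k \<in> {1..<length \<beta> - 1}. wt G (\<beta> ! k) (\<beta> ! Suc k) / (lam - wt G (\<beta> ! k) (\<beta> ! k)))"

definition reduce :: "'v set \<Rightarrow> 'v wgraph \<Rightarrow> 'v wgraph" where
  "reduce S G = \<lparr> verts = S,
     arcs = {(i, j). i \<in> S \<and> j \<in> S \<and> branches G S i j \<noteq> {}},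
     wt = (\<lambda>i j. if i \<in> S \<and> j \<in> S \<and> branches G S i j \<noteq> {}
                 then (\<Sum>\<beta> \<in> branches G S i j. branch_prod G \<beta>) else 0) \<rparr>"

primrec red_seq :: "'v wgraph \<Rightarrow> (nat \<Rightarrow> 'v set) \<Rightarrow> nat \<Rightarrow> 'v wgraph" where
  "red_seq G S 0 = G"
| "red_seq G S (Suc i) = reduce (S (Suc i)) (red_seq G S i)"

definition induces_seq :: "'v wgraph \<Rightarrow> (nat \<Rightarrow> 'v set) \<Rightarrow> nat \<Rightarrow> bool" where
  "induces_seq G S m \<longleftrightarrow> S 1 \<in> st G \<and>
     (\<forall>i. 1 \<le> i \<and> i \<le> m - 1 \<longrightarrow> S (Suc i) \<in> st (red_seq G S i))"

end

theory Submission
  imports Defs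
begin

lemma edge_seq_succ: "edge_seq G xs \<longleftrightarrow> set xs \<subseteq> verts G \<and> successively (\<lambda>a b. (a,b) \<in> arcs G) xs"
  by (simp add: edge_seq_def successively_conv_nth)

lemma len2_split: "length xs \<ge> 2 \<Longrightarrow> \<exists>x mid y. xs = x # mid @ [y]"
  by (metis One_nat_def Suc_1 Suc_le_length_iff length_0_conv not_less_eq_eq rev_exhaust list.size(3) nat.simps(3) zero_le)

lemma interior_iff:
  "(\<forall>k. 0 < k \<and> k < length (x # mid @ [y]) - 1 \<longrightarrow> (x # mid @ [y]) ! k \<notin> S) \<longleftrightarrow> set mid \<inter> S = {}"
proof
  assume H: "\<forall>k. 0 < k \<and> k < length (x # mid @ [y]) - 1 \<longrightarrow> (x # mid @ [y]) ! k \<notin> S"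
  show "set mid \<inter> S = {}"
  proof (rule ccontr)
    assume "set mid \<inter> S \<noteq> {}"
    then obtain n where n: "n < length mid" "mid ! n \<in> S" by (auto simp: in_set_conv_nth)
    have "(x # mid @ [y]) ! Suc n = mid ! n" using n by (simp add: nth_append)
    with H[rule_format, of "Suc n"] n show False by simp
  qed
next
  assume "set mid \<inter> S = {}"
  then show "\<forall>k. 0 < k \<and> k < length (x # mid @ [y]) - 1 \<longrightarrow> (x # mid @ [y]) ! k \<notin> S"
    by (auto simp: nth_append nth_Cons split: nat.splits dest!: nth_mem)
qed

lemma BR: "\<beta> \<in> branches G S i j \<longleftrightarrow> (\<exists>mid. \<beta> = i # mid @ [j] \<and> set mid \<inter> S = {} \<and> set \<beta> \<subseteq> verts G
   \<and> successively (\<lambda>a b. (a,b) \<in> arcs G) \<beta> \<and> (distinct \<beta> \<or> (i = j \<and> distinct (i # mid))))"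
proof
  assume "\<beta> \<in> branches G S i j"
  then have b: "(is_path G \<beta> \<or> is_cycle G \<beta>)" "hd \<beta> = i" "last \<beta> = j"
     "\<forall>k. 0 < k \<and> k < length \<beta> - 1 \<longrightarrow> \<beta> ! k \<notin> S" by (auto simp: branches_def)
  have "length \<beta> \<ge> 2" using b(1) by (auto simp: is_path_def is_cycle_def)
  then obtain x mid y where e: "\<beta> = x # mid @ [y]" using len2_split by blast
  with b have "x = i" "y = j" by auto
  with e b show "\<exists>mid. \<beta> = i # mid @ [j] \<and> set mid \<inter> S = {} \<and> set \<beta> \<subseteq> verts G
   \<and> successively (\<lambda>a b. (a,b) \<in> arcs G) \<beta> \<and> (distinct \<beta> \<or> (i = j \<and> distinct (i # mid)))"
    using interior_iff[of x mid y S]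
    by (auto simp: is_path_def is_cycle_def edge_seq_succ butlast_append)
next
  assume "\<exists>mid. \<beta> = i # mid @ [j] \<and> set mid \<inter> S = {} \<and> set \<beta> \<subseteq> verts G
   \<and> successively (\<lambda>a b. (a,b) \<in> arcs G) \<beta> \<and> (distinct \<beta> \<or> (i = j \<and> distinct (i # mid)))"
  then obtain mid where m: "\<beta> = i # mid @ [j]" "set mid \<inter> S = {}" "set \<beta> \<subseteq> verts G"
   "successively (\<lambda>a b. (a,b) \<in> arcs G) \<beta>" "(distinct \<beta> \<or> (i = j \<and> distinct (i # mid)))" by blast
  then show "\<beta> \<in> branches G S i j"
    using interior_iff[of i mid j S]
    by (auto simp: branches_def is_path_def is_cycle_def edge_seq_succ butlast_append)
qed


lemma bp_cons: "branch_prod H (x # y # z # r) = wt H x y / (lam - wt H y y) * branch_prod H (y # z # r)"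
proof -
  define f where "f = (\<lambda>k. wt H ((x # y # z # r) ! k) ((x # y # z # r) ! Suc k) / (lam - wt H ((x # y # z # r) ! k) ((x # y # z # r) ! k)))"
  define g where "g = (\<lambda>k. wt H ((y # z # r) ! k) ((y # z # r) ! Suc k) / (lam - wt H ((y # z # r) ! k) ((y # z # r) ! k)))"
  have 1: "prod f {1..<Suc (Suc (length r))} = f 1 * prod f {Suc 1..<Suc (Suc (length r))}"
    by (rule prod.atLeast_Suc_lessThan) simp
  have 2: "prod f {Suc 1..<Suc (Suc (length r))} = prod g {1..<Suc (length r)}"
    unfolding prod.shift_bounds_Suc_ivl f_def g_def by simp
  have "branch_prod H (x # y # z # r) = wt H x y * prod f {1..<Suc (Suc (length r))}"
    by (simp add: branch_prod_def f_def)
  also have "\<dots> = wt H x y * (wt H y z / (lam - wt H y y)) * prod g {1..<Suc (length r)}"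
    using 1 2 by (simp add: f_def)
  also have "branch_prod H (y # z # r) = wt H y z * prod g {1..<Suc (length r)}"
    by (simp add: branch_prod_def g_def)
  ultimately show ?thesis by simp
qed

lemma bp_two: "branch_prod H [x, y] = wt H x y"
  by (simp add: branch_prod_def)

lemma bp_append:
  "length a \<ge> 2 \<Longrightarrow> length b \<ge> 2 \<Longrightarrow> last a = hd b \<Longrightarrow>
   branch_prod H (a @ tl b) = branch_prod H a * branch_prod H b / (lam - wt H (hd b) (hd b))"
proof (induction a)
  case Nil then show ?case by simp
next
  case (Cons x a')
  show ?case
  proof (cases "length a' = 1")
    case True
    then obtain y where a': "a' = [y]" by (cases a') auto
    from Cons.prems obtain z r where b: "b = y # z # r" using a'
      by (cases b; cases "tl b") auto
    show ?thesis unfolding a' b by (simp add: bp_cons bp_two)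
  next
    case False
    with Cons.prems have l: "length a' \<ge> 2" by simp
    then obtain y z r where a': "a' = y # z # r" by (cases a'; cases "tl a'") auto
    have IH: "branch_prod H (a' @ tl b) = branch_prod H a' * branch_prod H b / (lam - wt H (hd b) (hd b))"
      using Cons.IH[OF l Cons.prems(2)] Cons.prems(3) a' by simp
    have "branch_prod H ((x # a') @ tl b) = wt H x y / (lam - wt H y y) * branch_prod H (a' @ tl b)"
      unfolding a' by (simp add: bp_cons)
    also have "branch_prod H (x # a') = wt H x y / (lam - wt H y y) * branch_prod H a'"
      unfolding a' by (simp add: bp_cons)
    ultimately show ?thesis using IH by simp
  qed
qed

lemma finite_branches: "finite (verts G) \<Longrightarrow> finite (branches G S i j)"
proof -
  assume f: "finite (verts G)"
  have "branches G S i j \<subseteq> {xs. set xs \<subseteq> verts G \<and> length xs \<le> card (verts G) + 1}"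
  proof
    fix \<beta> assume "\<beta> \<in> branches G S i j"
    then obtain mid where m: "\<beta> = i # mid @ [j]" "set \<beta> \<subseteq> verts G" "distinct (i # mid)"
      unfolding BR by auto
    have "length (i # mid) = card (set (i # mid))" using m(3) by (simp add: distinct_card)
    also have "\<dots> \<le> card (verts G)" using m(1,2) f by (intro card_mono) auto
    finally show "\<beta> \<in> {xs. set xs \<subseteq> verts G \<and> length xs \<le> card (verts G) + 1}" using m by simp
  qed
  then show ?thesis using finite_lists_length_le[OF f] by (rule finite_subset)
qed

fun E :: "'v wgraph \<Rightarrow> 'v set \<Rightarrow> 'v list \<Rightarrow> 'v list set" where
  "E G S (x # y # rest) = (if rest = [] then branches G S x y
      else (\<lambda>(a, b). a @ tl b) ` (branches G S x y \<times> E G S (y # rest)))"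
| "E G S _ = {}"

lemma E1:
  "\<gamma> \<in> E G S \<beta> \<Longrightarrow> set \<beta> \<subseteq> S \<Longrightarrow>
    length \<beta> \<ge> 2 \<and> length \<gamma> \<ge> 2 \<and> hd \<gamma> = hd \<beta> \<and> last \<gamma> = last \<beta> \<and> filter (\<lambda>x. x \<in> S) \<gamma> = \<beta>
    \<and> set \<gamma> \<subseteq> verts G \<and> successively (\<lambda>a b. (a, b) \<in> arcs G) \<gamma>
    \<and> successively (\<lambda>x y. branches G S x y \<noteq> {}) \<beta>"
proof (induction G S \<beta> arbitrary: \<gamma> rule: E.induct)
  case (1 G S x y rest)
  show ?case
  proof (cases "rest = []")
    case True
    with 1 obtain mid where m: "\<gamma> = x # mid @ [y]" "set mid \<inter> S = {}" "set \<gamma> \<subseteq> verts G"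
      "successively (\<lambda>a b. (a,b) \<in> arcs G) \<gamma>" by (auto simp: BR)
    have "filter (\<lambda>x. x \<in> S) mid = []" using m(2) by (auto simp: filter_empty_conv)
    then show ?thesis using m 1 True by auto
  next
    case False
    with 1(2) obtain a b where ab: "\<gamma> = a @ tl b" "a \<in> branches G S x y" "b \<in> E G S (y # rest)" by auto
    from ab(2) obtain mid where m: "a = x # mid @ [y]" "set mid \<inter> S = {}" "set a \<subseteq> verts G"
      "successively (\<lambda>a b. (a,b) \<in> arcs G) a" by (auto simp: BR)
    have IH: "length (y # rest) \<ge> 2 \<and> length b \<ge> 2 \<and> hd b = y \<and> last b = last (y # rest) \<and> filter (\<lambda>x. x \<in> S) b = y # rest
    \<and> set b \<subseteq> verts G \<and> successively (\<lambda>a b. (a, b) \<in> arcs G) b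
    \<and> successively (\<lambda>x y. branches G S x y \<noteq> {}) (y # rest)"
      using 1(1)[OF False ab(3)] 1(3) by simp
    then obtain tb where tb: "b = y # tb" by (cases b) auto
    have g: "\<gamma> = x # mid @ b" using ab(1) m(1) tb by simp
    have "filter (\<lambda>x. x \<in> S) mid = []" using m(2) by (auto simp: filter_empty_conv)
    then show ?thesis using IH m g tb ab(2) False 1(3)
      by (auto simp: successively_append_iff successively_Cons hd_append)
  qed
qed auto


lemma WT_R: "x \<in> S \<Longrightarrow> y \<in> S \<Longrightarrow> wt (reduce S G) x y = (\<Sum>\<beta>\<in>branches G S x y. branch_prod G \<beta>)"
  by (simp add: reduce_def)

lemma split_unique:
  "set m \<inter> S = {} \<Longrightarrow> set m' \<inter> S = {} \<Longrightarrow> y \<in> S \<Longrightarrow> m @ y # t = m' @ y # t' \<Longrightarrow> m = m' \<and> t = t'"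
proof (induction m arbitrary: m')
  case Nil then show ?case by (cases m') auto
next
  case (Cons z m) then show ?case by (cases m') auto
qed

lemma glue_inj:
  assumes "y \<in> S"
  shows "inj_on (\<lambda>(a, b). a @ tl b) (branches G S x y \<times> {b. b \<noteq> [] \<and> hd b = y})"
proof (rule inj_onI)
  fix p q
  assume hp: "p \<in> branches G S x y \<times> {b. b \<noteq> [] \<and> hd b = y}" and hq: "q \<in> branches G S x y \<times> {b. b \<noteq> [] \<and> hd b = y}"
    and eq: "(\<lambda>(a, b). a @ tl b) p = (\<lambda>(a, b). a @ tl b) q"
  obtain a b where p: "p = (a, b)" by (cases p)
  obtain a' b' where q: "q = (a', b')" by (cases q)
  from hp p have h1: "a \<in> branches G S x y" "b \<noteq> []" "hd b = y" by auto
  from hq q have h2: "a' \<in> branches G S x y" "b' \<noteq> []" "hd b' = y" by auto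
  from eq p q have h7: "a @ tl b = a' @ tl b'" by simp
  from h1(1) obtain m where m: "a = x # m @ [y]" "set m \<inter> S = {}" by (auto simp: BR)
  from h2(1) obtain m' where m': "a' = x # m' @ [y]" "set m' \<inter> S = {}" by (auto simp: BR)
  have "m @ y # tl b = m' @ y # tl b'" using h7 m m' by simp
  from split_unique[OF m(2) m'(2) assms this] have "m = m'" "tl b = tl b'" by auto
  moreover have "b = y # tl b" using h1 by (cases b) auto
  moreover have "b' = y # tl b'" using h2 by (cases b') auto
  ultimately show "p = q" using m m' p q by metis
qed

lemma finite_E: "finite (verts G) \<Longrightarrow> finite (E G S \<beta>)"
  by (induction G S \<beta> rule: E.induct) (auto simp: finite_branches)

lemma E_sum:
  "finite (verts G) \<Longrightarrow> set \<beta> \<subseteq> S \<Longrightarrow> (\<forall>u\<in>set (tl (butlast \<beta>)). wt (reduce S G) u u = wt G u u) \<Longrightarrow>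
   length \<beta> \<ge> 2 \<Longrightarrow> (\<Sum>\<gamma>\<in>E G S \<beta>. branch_prod G \<gamma>) = branch_prod (reduce S G) \<beta>"
proof (induction G S \<beta> rule: E.induct)
  case (1 G S x y rest)
  show ?case
  proof (cases "rest = []")
    case True
    then show ?thesis using 1(2,3) by (simp add: bp_two WT_R)
  next
    case False
    then obtain z r where rest: "rest = z # r" by (cases rest) auto
    let ?B = "branches G S x y" and ?E = "E G S (y # rest)" and ?d = "lam - wt G y y"
    have yS: "y \<in> S" using 1(3) by simp
    have Eb: "\<And>b. b \<in> ?E \<Longrightarrow> length b \<ge> 2 \<and> hd b = y"
      using E1[of _ G S "y # rest"] 1(3) by auto
    have Ba: "\<And>a. a \<in> ?B \<Longrightarrow> length a \<ge> 2 \<and> last a = y"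
      by (auto simp: BR)
    have inj: "inj_on (\<lambda>(a, b). a @ tl b) (?B \<times> ?E)"
      by (rule inj_on_subset[OF glue_inj[OF yS]]) (use Eb in fastforce)
    have fB: "finite ?B" using 1(2) by (rule finite_branches)
    have fE: "finite ?E" using 1(2) by (rule finite_E)
    have "(\<Sum>\<gamma>\<in>E G S (x # y # rest). branch_prod G \<gamma>) = (\<Sum>\<gamma>\<in>(\<lambda>(a, b). a @ tl b) ` (?B \<times> ?E). branch_prod G \<gamma>)"
      using False by simp
    also have "\<dots> = (\<Sum>(a,b)\<in>?B \<times> ?E. branch_prod G (a @ tl b))"
      by (subst sum.reindex[OF inj]) (simp add: case_prod_unfold)
    also have "\<dots> = (\<Sum>(a,b)\<in>?B \<times> ?E. branch_prod G a * branch_prod G b / ?d)"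
      by (intro sum.cong refl) (use Eb Ba bp_append in fastforce)
    also have "\<dots> = (\<Sum>a\<in>?B. \<Sum>b\<in>?E. branch_prod G a * branch_prod G b / ?d)"
      by (rule sum.cartesian_product[symmetric])
    also have "\<dots> = (\<Sum>a\<in>?B. \<Sum>b\<in>?E. branch_prod G a * branch_prod G b) / ?d"
      by (simp add: sum_divide_distrib)
    also have "\<dots> = (\<Sum>a\<in>?B. branch_prod G a) * (\<Sum>b\<in>?E. branch_prod G b) / ?d"
      by (simp add: sum_product)
    also have "(\<Sum>b\<in>?E. branch_prod G b) = branch_prod (reduce S G) (y # rest)"
      using 1(1)[OF False] 1(2-5) rest by auto
    also have "(\<Sum>a\<in>?B. branch_prod G a) = wt (reduce S G) x y"
      using 1(3) by (simp add: WT_R)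
    also have "wt G y y = wt (reduce S G) y y"
      using 1(4) rest by simp
    finally show ?thesis unfolding rest by (simp add: bp_cons)
  qed
qed auto


lemma distinct_imp_adj: "distinct xs \<Longrightarrow> distinct_adj xs"
  by (induction xs rule: induct_list012) auto

lemma cycle_from_list:
  assumes "length ws \<ge> 2" "hd ws = last ws" "distinct (butlast ws)"
    "successively (\<lambda>a b. (a,b) \<in> arcs G) ws" "distinct_adj ws" "set ws \<subseteq> verts G - T"
  shows "is_cycle (induced (loopless G) (verts G - T)) ws"
  unfolding is_cycle_def edge_seq_def
proof (intro conjI allI impI)
  fix k assume k: "Suc k < length ws"
  have "(ws ! k, ws ! Suc k) \<in> arcs G" using successively_nth[OF assms(4) k] by simp
  moreover have "ws ! k \<noteq> ws ! Suc k" using distinct_adj_nth[OF assms(5) k] .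
  moreover have "ws ! k \<in> set ws" "ws ! Suc k \<in> set ws" using k by auto
  moreover have "ws ! k \<in> verts G - T" "ws ! Suc k \<in> verts G - T"
    using assms(6) calculation(3,4) by auto
  ultimately show "(ws ! k, ws ! Suc k) \<in> arcs (induced (loopless G) (verts G - T))"
    by (simp add: induced_def loopless_def)
qed (use assms in \<open>auto simp: induced_def loopless_def\<close>)

lemma CW:
  "length ws \<ge> 2 \<Longrightarrow> hd ws = last ws \<Longrightarrow> successively (\<lambda>a b. (a,b) \<in> arcs G) ws \<Longrightarrow> distinct_adj ws
   \<Longrightarrow> set ws \<subseteq> verts G - T \<Longrightarrow> \<exists>c. is_cycle (induced (loopless G) (verts G - T)) c"
proof (induction "length ws" arbitrary: ws rule: less_induct)
  case less
  show ?case
  proof (cases "distinct (butlast ws)")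
    case True
    then show ?thesis using cycle_from_list less.prems by blast
  next
    case False
    then obtain xs z ys zs where d: "butlast ws = xs @ [z] @ ys @ [z] @ zs"
      using not_distinct_decomp by blast
    have "ws = butlast ws @ [last ws]" using less.prems(1) by (cases ws rule: rev_cases) auto
    with d obtain lw where ws: "ws = xs @ (z # ys @ [z]) @ (zs @ [lw])" by simp
    let ?s = "z # ys @ [z]"
    have s1: "successively (\<lambda>a b. (a,b) \<in> arcs G) ?s"
      using less.prems(3) unfolding ws successively_append_iff by blast
    have s2: "distinct_adj ?s"
      using less.prems(4) unfolding ws distinct_adj_append_iff by blast
    have s3: "set ?s \<subseteq> verts G - T" using less.prems(5) unfolding ws by auto
    have "length ?s < length ws" unfolding ws by simp
    then show ?thesis using less.hyps[OF _ _ _ s1 s2 s3] by simp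
  qed
qed

lemma E5:
  "\<gamma> \<in> E G S \<beta> \<Longrightarrow> set \<beta> \<subseteq> S \<Longrightarrow> distinct_adj \<beta> \<Longrightarrow> distinct_adj \<gamma>"
proof (induction G S \<beta> arbitrary: \<gamma> rule: E.induct)
  case (1 G S x y rest)
  have xy: "x \<noteq> y" using 1(4) by simp
  show ?case
  proof (cases "rest = []")
    case True
    with 1 xy show ?thesis by (auto simp: BR intro: distinct_imp_adj)
  next
    case False
    with 1(2) obtain a b where ab: "\<gamma> = a @ tl b" "a \<in> branches G S x y" "b \<in> E G S (y # rest)" by auto
    from ab(2) xy obtain mid where m: "a = x # mid @ [y]" "distinct a" by (auto simp: BR)
    have db: "distinct_adj b" using 1(1)[OF False ab(3)] 1(3,4) by (auto simp: distinct_adj_Cons)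
    have "hd b = y" "length b \<ge> 2" using E1[OF ab(3)] 1(3) by auto
    then obtain tb where tb: "b = y # tb" by (cases b) auto
    have g: "\<gamma> = (x # mid) @ b" using ab(1) m tb by simp
    have da: "distinct_adj ((x # mid) @ [y])" using distinct_imp_adj[OF m(2)] m(1) by simp
    then have "distinct_adj (x # mid)" "last (x # mid) \<noteq> y"
      unfolding distinct_adj_append_iff by auto
    then show ?thesis unfolding g distinct_adj_append_iff using db tb by auto
  qed
qed auto


lemma E_ne: "length \<beta> \<ge> 2 \<Longrightarrow> successively (\<lambda>x y. branches G S x y \<noteq> {}) \<beta> \<Longrightarrow> E G S \<beta> \<noteq> {}"
  by (induction G S \<beta> rule: E.induct) (auto simp: Suc_le_eq)

lemma D:
  "x \<in> S \<Longrightarrow> y \<in> S \<Longrightarrow> set (x # mid @ [y]) \<subseteq> verts G \<Longrightarrow> successively (\<lambda>a b. (a,b) \<in> arcs G) (x # mid @ [y])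
   \<Longrightarrow> (distinct (x # mid @ [y]) \<or> (x = y \<and> distinct (x # mid)))
   \<Longrightarrow> x # mid @ [y] \<in> E G S (x # filter (\<lambda>v. v \<in> S) mid @ [y])"
proof (induction "length mid" arbitrary: x mid rule: less_induct)
  case less
  show ?case
  proof (cases "\<exists>v\<in>set mid. v \<in> S")
    case False
    then have "filter (\<lambda>v. v \<in> S) mid = []" by (auto simp: filter_empty_conv)
    then show ?thesis using less.prems False by (auto simp: BR)
  next
    case True
    then obtain p z q where pzq: "mid = p @ z # q" "z \<in> S" "\<forall>v\<in>set p. v \<notin> S"
      using split_list_first_prop[of mid "\<lambda>v. v \<in> S"] by blast
    have fm: "filter (\<lambda>v. v \<in> S) mid = z # filter (\<lambda>v. v \<in> S) q"
      using pzq by (simp add: filter_empty_conv)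
    have g: "x # mid @ [y] = (x # p @ [z]) @ (q @ [y])" using pzq by simp
    have g2: "x # mid @ [y] = (x # p) @ (z # q @ [y])" using pzq by simp
    have sa: "successively (\<lambda>a b. (a,b) \<in> arcs G) (x # p @ [z])"
      using less.prems(4) unfolding g successively_append_iff by blast
    have sb: "successively (\<lambda>a b. (a,b) \<in> arcs G) (z # q @ [y])"
      using less.prems(4) unfolding g2 successively_append_iff by blast
    have da: "distinct (x # p @ [z])" using less.prems(5) pzq by auto
    have db: "distinct (z # q @ [y]) \<or> (z = y \<and> distinct (z # q))" using less.prems(5) pzq by auto
    have a: "x # p @ [z] \<in> branches G S x z"
      unfolding BR using pzq less.prems(3) sa da by auto
    have b: "z # q @ [y] \<in> E G S (z # filter (\<lambda>v. v \<in> S) q @ [y])"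
      using less.hyps[of q z] pzq less.prems(2,3) sb db by auto
    have "x # mid @ [y] \<in> (\<lambda>(a,b). a @ tl b) ` (branches G S x z \<times> E G S (z # filter (\<lambda>v. v \<in> S) q @ [y]))"
      using a b pzq by (intro rev_image_eqI[of "(x # p @ [z], z # q @ [y])"]) auto
    then show ?thesis by (simp add: fm)
  qed
qed

context
  fixes G :: "'v wgraph" and S T :: "'v set"
  assumes wf: "wf_graph G" and Tst: "T \<in> st G" and TS: "T \<subseteq> S" and SV: "S \<subseteq> verts G"
begin

lemma finV: "finite (verts G)" using wf by (simp add: wf_graph_def)

lemma nocyc: "\<not> (\<exists>c. is_cycle (induced (loopless G) (verts G - T)) c)"
  using Tst by (simp add: st_def structural_def)

lemma LOOP:
  assumes u: "u \<in> S - T"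
  shows "wt (reduce S G) u u = wt G u u"
proof -
  have sub: "branches G S u u \<subseteq> {[u, u]}"
  proof
    fix \<beta> assume "\<beta> \<in> branches G S u u"
    then obtain mid where m: "\<beta> = u # mid @ [u]" "set mid \<inter> S = {}" "set \<beta> \<subseteq> verts G"
      "successively (\<lambda>a b. (a,b) \<in> arcs G) \<beta>" "distinct (u # mid)" unfolding BR by auto
    have "mid = []"
    proof (rule ccontr)
      assume ne: "mid \<noteq> []"
      have "distinct_adj (u # mid)" using m(5) by (rule distinct_imp_adj)
      moreover have "last (u # mid) \<noteq> u" using ne m(5) by (simp add: last_in_set)
         (metis last_in_set)
      ultimately have "distinct_adj ((u # mid) @ [u])" unfolding distinct_adj_append_iff by auto
      then have "distinct_adj \<beta>" using m(1) by simp
      moreover have "set \<beta> \<subseteq> verts G - T" using m u TS by auto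
      ultimately show False using CW[of \<beta> G T] m nocyc by auto
    qed
    then show "\<beta> \<in> {[u, u]}" using m by simp
  qed
  have uS: "u \<in> S" using u by simp
  show ?thesis
  proof (cases "[u, u] \<in> branches G S u u")
    case True
    then have "branches G S u u = {[u,u]}" using sub by auto
    then show ?thesis using uS by (simp add: WT_R bp_two)
  next
    case False
    then have "branches G S u u = {}" using sub by auto
    moreover have "(u, u) \<notin> arcs G" using False uS SV unfolding BR by auto
    then have "wt G u u = 0" using wf by (simp add: wf_graph_def)
    ultimately show ?thesis using uS by (simp add: WT_R)
  qed
qed

end


context
  fixes G :: "'v wgraph" and S T :: "'v set"
  assumes wf: "wf_graph G" and Tst: "T \<in> st G" and TS: "T \<subseteq> S" and SV: "S \<subseteq> verts G"
begin

lemma ST_R: "T \<in> st (reduce S G)"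
proof -
  have ne: "T \<noteq> {}" using Tst by (simp add: st_def structural_def)
  have nc: "\<not> (\<exists>c. is_cycle (induced (loopless (reduce S G)) (S - T)) c)"
  proof
    assume "\<exists>c. is_cycle (induced (loopless (reduce S G)) (S - T)) c"
    then obtain c where c: "is_cycle (induced (loopless (reduce S G)) (S - T)) c" by blast
    then have c1: "length c \<ge> 2" "hd c = last c" and
      es: "set c \<subseteq> S - T" "successively (\<lambda>a b. (a,b) \<in> arcs (induced (loopless (reduce S G)) (S - T))) c"
      unfolding is_cycle_def edge_seq_succ by (auto simp: induced_def loopless_def reduce_def)
    have sc: "successively (\<lambda>x y. branches G S x y \<noteq> {}) c"
      using es(2) by (rule successively_mono) (auto simp: induced_def loopless_def reduce_def)
    have dc: "distinct_adj c" unfolding distinct_adj_def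
      using es(2) by (rule successively_mono) (auto simp: induced_def loopless_def reduce_def)
    obtain \<gamma> where g: "\<gamma> \<in> E G S c" using E_ne[OF c1(1) sc] by blast
    have cS: "set c \<subseteq> S" using es by auto
    note e1 = E1[OF g cS]
    have dg: "distinct_adj \<gamma>" using E5[OF g cS dc] .
    have "set \<gamma> \<subseteq> verts G - T"
    proof
      fix v assume v: "v \<in> set \<gamma>"
      have "v \<in> verts G" using v e1 by auto
      moreover have "v \<notin> T"
      proof
        assume "v \<in> T"
        then have "v \<in> set (filter (\<lambda>x. x \<in> S) \<gamma>)" using v TS by auto
        then have "v \<in> set c" using e1 by simp
        with es(1) \<open>v \<in> T\<close> show False by auto
      qed
      ultimately show "v \<in> verts G - T" by simp
    qed
    then show False using CW[of \<gamma> G T] e1 c1 dg nocyc[OF wf Tst TS SV] by auto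
  qed
  have lp: "\<forall>v\<in>verts (reduce S G) - T. wt (reduce S G) v v \<noteq> lam"
  proof
    fix v assume "v \<in> verts (reduce S G) - T"
    then have v: "v \<in> S - T" by (simp add: reduce_def)
    then have "v \<in> verts G - T" using SV by auto
    then have "wt G v v \<noteq> lam" using Tst by (simp add: st_def structural_def)
    then show "wt (reduce S G) v v \<noteq> lam" using LOOP[OF wf Tst TS SV v] by simp
  qed
  show ?thesis using ne nc lp TS unfolding st_def structural_def by (simp add: reduce_def)
qed

lemma E2:
  assumes i: "i \<in> T" and j: "j \<in> T" and b: "\<beta> \<in> branches (reduce S G) T i j" and g: "\<gamma> \<in> E G S \<beta>"
  shows "\<gamma> \<in> branches G T i j"
proof -
  obtain mb where mb: "\<beta> = i # mb @ [j]" "set mb \<inter> T = {}" "set \<beta> \<subseteq> S"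
    "distinct \<beta> \<or> (i = j \<and> distinct (i # mb))"
    using b unfolding BR by (auto simp: reduce_def)
  note e1 = E1[OF g mb(3)]
  then obtain x mg y where "\<gamma> = x # mg @ [y]" using len2_split by blast
  then have gm: "\<gamma> = i # mg @ [j]" using e1 mb(1) by simp
  have iS: "i \<in> S" "j \<in> S" using i j TS by auto
  have fm: "filter (\<lambda>x. x \<in> S) mg = mb" using e1 gm mb(1) iS by simp
  have mgT: "set mg \<inter> T = {}"
  proof (rule ccontr)
    assume "set mg \<inter> T \<noteq> {}"
    then obtain u where "u \<in> set mg" "u \<in> T" by auto
    then have "u \<in> set mb" using fm TS by auto
    with mb(2) \<open>u \<in> T\<close> show False by auto
  qed
  have dist: "distinct \<gamma> \<or> (i = j \<and> distinct (i # mg))"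
  proof (cases "mb = []")
    case True
    then have "\<gamma> \<in> branches G S i j" using g mb(1) by simp
    then show ?thesis using gm unfolding BR by auto
  next
    case False
    have "distinct_adj \<beta>"
    proof (cases "distinct \<beta>")
      case True then show ?thesis by (rule distinct_imp_adj)
    next
      case False
      with mb(4) have ij: "i = j" "distinct (i # mb)" by auto
      have "distinct_adj (i # mb)" using ij(2) by (rule distinct_imp_adj)
      moreover have "last (i # mb) \<noteq> j" using ij \<open>mb \<noteq> []\<close> by (metis distinct.simps(2) last.simps last_in_set)
      ultimately show ?thesis unfolding mb(1) using distinct_adj_append_iff[of "i # mb" "[j]"] by simp
    qed
    then have dg: "distinct_adj \<gamma>" using E5[OF g mb(3)] by simp
    have "distinct mg"
    proof (rule ccontr)
      assume "\<not> distinct mg"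
      then obtain xs z ys zs where d: "mg = xs @ [z] @ ys @ [z] @ zs"
        using not_distinct_decomp by blast
      let ?s = "z # ys @ [z]"
      have gg: "\<gamma> = (i # xs) @ ?s @ (zs @ [j])" using gm d by simp
      have s1: "successively (\<lambda>a b. (a,b) \<in> arcs G) ?s"
        using e1 unfolding gg successively_append_iff by blast
      have s2: "distinct_adj ?s"
        using dg unfolding gg distinct_adj_append_iff by blast
      have s3: "set ?s \<subseteq> verts G - T" using e1 mgT d gm by auto
      show False using CW[of ?s G T] s1 s2 s3 nocyc[OF wf Tst TS SV] by simp
    qed
    then show ?thesis using gm mgT i j by auto
  qed
  show ?thesis unfolding BR using gm mgT e1 dist by auto
qed

lemma E3:
  assumes i: "i \<in> T" and j: "j \<in> T" and g: "\<gamma> \<in> branches G T i j"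
  shows "\<exists>\<beta>\<in>branches (reduce S G) T i j. \<gamma> \<in> E G S \<beta>"
proof -
  obtain mg where m: "\<gamma> = i # mg @ [j]" "set mg \<inter> T = {}" "set \<gamma> \<subseteq> verts G"
    "successively (\<lambda>a b. (a,b) \<in> arcs G) \<gamma>" "distinct \<gamma> \<or> (i = j \<and> distinct (i # mg))"
    using g unfolding BR by blast
  have iS: "i \<in> S" "j \<in> S" using i j TS by auto
  let ?\<beta> = "i # filter (\<lambda>v. v \<in> S) mg @ [j]"
  have ge: "\<gamma> \<in> E G S ?\<beta>" using m(3-5) unfolding m(1) by (intro D iS) auto
  have bS: "set ?\<beta> \<subseteq> S" using iS by auto
  note e1 = E1[OF ge bS]
  have sb: "successively (\<lambda>x y. branches G S x y \<noteq> {}) ?\<beta>" using e1 by blast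
  have s1: "successively (\<lambda>a b. (a,b) \<in> arcs (reduce S G)) ?\<beta>"
    using sb
  proof (rule successively_mono)
    fix x y assume xy: "x \<in> set ?\<beta>" "y \<in> set ?\<beta>" "branches G S x y \<noteq> {}"
    have "x \<in> S" "y \<in> S" using xy(1,2) bS by blast+
    then show "(x,y) \<in> arcs (reduce S G)" using xy(3) by (simp add: reduce_def)
  qed
  have s2: "distinct ?\<beta> \<or> (i = j \<and> distinct (i # filter (\<lambda>v. v \<in> S) mg))"
  proof (cases "distinct \<gamma>")
    case True
    then have "i \<notin> set mg" "j \<notin> set mg" "i \<noteq> j" "distinct mg" using m(1) by auto
    then show ?thesis by simp
  next
    case False
    then have "i = j" "i \<notin> set mg" "distinct mg" using m(5) by auto
    then show ?thesis by simp
  qed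
  have s3: "set (filter (\<lambda>v. v \<in> S) mg) \<inter> T = {}" using m(2) by auto
  have s4: "set ?\<beta> \<subseteq> verts (reduce S G)" using bS by (simp add: reduce_def)
  have "?\<beta> \<in> branches (reduce S G) T i j"
    unfolding BR by (intro exI[of _ "filter (\<lambda>v. v \<in> S) mg"] conjI refl s1 s2 s3 s4)
  then show ?thesis using ge by blast
qed


lemma MAIN:
  assumes i: "i \<in> T" and j: "j \<in> T"
  shows "(branches (reduce S G) T i j \<noteq> {} \<longleftrightarrow> branches G T i j \<noteq> {}) \<and>
    (\<Sum>\<beta>\<in>branches (reduce S G) T i j. branch_prod (reduce S G) \<beta>) = (\<Sum>\<gamma>\<in>branches G T i j. branch_prod G \<gamma>)"
proof -
  let ?BR = "branches (reduce S G) T i j" and ?BG = "branches G T i j"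
  have U: "?BG = (\<Union>\<beta>\<in>?BR. E G S \<beta>)" using E2[OF i j] E3[OF i j] by blast
  have BRS: "\<And>\<beta>. \<beta> \<in> ?BR \<Longrightarrow> set \<beta> \<subseteq> S"
    unfolding BR by (auto simp: reduce_def)
  have disj: "\<forall>\<beta>\<in>?BR. \<forall>\<beta>'\<in>?BR. \<beta> \<noteq> \<beta>' \<longrightarrow> E G S \<beta> \<inter> E G S \<beta>' = {}"
  proof (intro ballI impI)
    fix \<beta> \<beta>' assume h: "\<beta> \<in> ?BR" "\<beta>' \<in> ?BR" "\<beta> \<noteq> \<beta>'"
    show "E G S \<beta> \<inter> E G S \<beta>' = {}"
    proof (rule ccontr)
      assume "E G S \<beta> \<inter> E G S \<beta>' \<noteq> {}"
      then obtain \<gamma> where "\<gamma> \<in> E G S \<beta>" "\<gamma> \<in> E G S \<beta>'" by blast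
      then have "filter (\<lambda>x. x \<in> S) \<gamma> = \<beta>" "filter (\<lambda>x. x \<in> S) \<gamma> = \<beta>'"
        using E1 BRS h by blast+
      with h(3) show False by simp
    qed
  qed
  have finS: "finite S" using finite_subset[OF SV finV[OF wf Tst TS SV]] .
  have finBR: "finite ?BR" using finite_branches[of "reduce S G"] finS by (simp add: reduce_def)
  have finE: "\<forall>\<beta>\<in>?BR. finite (E G S \<beta>)" using finite_E finV[OF wf Tst TS SV] by blast
  have sumBG: "(\<Sum>\<gamma>\<in>?BG. branch_prod G \<gamma>) = (\<Sum>\<beta>\<in>?BR. \<Sum>\<gamma>\<in>E G S \<beta>. branch_prod G \<gamma>)"
    unfolding U by (rule sum.UNION_disjoint[OF finBR finE disj])
  have each: "\<And>\<beta>. \<beta> \<in> ?BR \<Longrightarrow> (\<Sum>\<gamma>\<in>E G S \<beta>. branch_prod G \<gamma>) = branch_prod (reduce S G) \<beta>"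
  proof -
    fix \<beta> assume b: "\<beta> \<in> ?BR"
    then obtain mb where mb: "\<beta> = i # mb @ [j]" "set mb \<inter> T = {}" "set \<beta> \<subseteq> verts (reduce S G)"
      unfolding BR by blast
    have bS: "set \<beta> \<subseteq> S" using BRS b .
    have "\<forall>u\<in>set (tl (butlast \<beta>)). wt (reduce S G) u u = wt G u u"
    proof
      fix u assume "u \<in> set (tl (butlast \<beta>))"
      then have "u \<in> set mb" using mb(1) by (simp add: butlast_append)
      then have "u \<in> S - T" using mb bS by auto
      then show "wt (reduce S G) u u = wt G u u" by (rule LOOP[OF wf Tst TS SV])
    qed
    then show "(\<Sum>\<gamma>\<in>E G S \<beta>. branch_prod G \<gamma>) = branch_prod (reduce S G) \<beta>"
      using E_sum[OF finV[OF wf Tst TS SV] bS] mb(1) by simp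
  qed
  have ne: "\<And>\<beta>. \<beta> \<in> ?BR \<Longrightarrow> E G S \<beta> \<noteq> {}"
  proof -
    fix \<beta> assume b: "\<beta> \<in> ?BR"
    then obtain mb where mb: "\<beta> = i # mb @ [j]" "successively (\<lambda>a b. (a,b) \<in> arcs (reduce S G)) \<beta>"
      unfolding BR by blast
    have "successively (\<lambda>x y. branches G S x y \<noteq> {}) \<beta>"
      using mb(2) by (rule successively_mono) (simp add: reduce_def)
    moreover have "length \<beta> \<ge> 2" using mb(1) by simp
    ultimately show "E G S \<beta> \<noteq> {}" using E_ne by blast
  qed
  have "?BR \<noteq> {} \<longleftrightarrow> ?BG \<noteq> {}"
  proof
    assume "?BR \<noteq> {}"
    then obtain \<beta> where "\<beta> \<in> ?BR" by blast
    with ne[OF this] show "?BG \<noteq> {}" unfolding U by blast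
  next
    assume "?BG \<noteq> {}"
    then show "?BR \<noteq> {}" unfolding U by blast
  qed
  moreover have "(\<Sum>\<beta>\<in>?BR. branch_prod (reduce S G) \<beta>) = (\<Sum>\<gamma>\<in>?BG. branch_prod G \<gamma>)"
    unfolding sumBG using each by (simp cong: sum.cong)
  ultimately show ?thesis by blast
qed

lemma COMP: "reduce T (reduce S G) = reduce T G"
proof -
  have A: "\<And>i j. i \<in> T \<Longrightarrow> j \<in> T \<Longrightarrow> (branches (reduce S G) T i j \<noteq> {}) = (branches G T i j \<noteq> {})"
    using MAIN by blast
  have B: "\<And>i j. i \<in> T \<Longrightarrow> j \<in> T \<Longrightarrow> (\<Sum>\<beta>\<in>branches (reduce S G) T i j. branch_prod (reduce S G) \<beta>) = (\<Sum>\<gamma>\<in>branches G T i j. branch_prod G \<gamma>)"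
    using MAIN by blast
  have arcs_eq: "{(i, j). i \<in> T \<and> j \<in> T \<and> branches (reduce S G) T i j \<noteq> {}} = {(i, j). i \<in> T \<and> j \<in> T \<and> branches G T i j \<noteq> {}}"
    using A by blast
  have wt_eq: "(\<lambda>i j. if i \<in> T \<and> j \<in> T \<and> branches (reduce S G) T i j \<noteq> {}
                 then (\<Sum>\<beta> \<in> branches (reduce S G) T i j. branch_prod (reduce S G) \<beta>) else 0)
       = (\<lambda>i j. if i \<in> T \<and> j \<in> T \<and> branches G T i j \<noteq> {}
                 then (\<Sum>\<beta> \<in> branches G T i j. branch_prod G \<beta>) else 0)"
  proof (intro ext)
    fix i j show "(if i \<in> T \<and> j \<in> T \<and> branches (reduce S G) T i j \<noteq> {}
                 then (\<Sum>\<beta> \<in> branches (reduce S G) T i j. branch_prod (reduce S G) \<beta>) else 0)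
       = (if i \<in> T \<and> j \<in> T \<and> branches G T i j \<noteq> {}
                 then (\<Sum>\<beta> \<in> branches G T i j. branch_prod G \<beta>) else 0)"
      by (cases "i \<in> T \<and> j \<in> T") (auto simp: A B)
  qed
  show ?thesis unfolding reduce_def[of T "reduce S G"] reduce_def[of T G] arcs_eq wt_eq ..
qed

end

lemma st_mono: "T \<in> st G \<Longrightarrow> T \<subseteq> S \<Longrightarrow> S \<subseteq> verts G \<Longrightarrow> S \<in> st G"
  unfolding st_def structural_def is_cycle_def edge_seq_def
  by (auto simp: induced_def loopless_def) blast+


theorem theorem2:
  fixes G :: "'v wgraph" and S :: "nat \<Rightarrow> 'v set" and m :: nat
  assumes "wf_graph G"
    and "1 \<le> m"
    and "S m \<in> st G"
    and "\<forall>i. 1 \<le> i \<and> i < m \<longrightarrow> S (Suc i) \<subseteq> S i"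
    and "S 1 \<subseteq> verts G"
  shows "induces_seq G S m \<and> red_seq G S m = reduce (S m) G"
proof -
  note wf = assms(1)
  have chain: "\<And>k i. 1 \<le> i \<Longrightarrow> i \<le> k \<Longrightarrow> k \<le> m \<Longrightarrow> S k \<subseteq> S i"
  proof -
    fix k i show "1 \<le> i \<Longrightarrow> i \<le> k \<Longrightarrow> k \<le> m \<Longrightarrow> S k \<subseteq> S i"
    proof (induction k)
      case 0 then show ?case by simp
    next
      case (Suc k)
      show ?case
      proof (cases "i = Suc k")
        case True then show ?thesis by simp
      next
        case False
        then have "i \<le> k" using Suc.prems by simp
        then have "S k \<subseteq> S i" using Suc by simp
        moreover have "S (Suc k) \<subseteq> S k" using assms(4) Suc.prems \<open>i \<le> k\<close> by simp
        ultimately show ?thesis by blast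
      qed
    qed
  qed
  have SV: "S i \<subseteq> verts G" if "1 \<le> i" "i \<le> m" for i
  proof -
    have "S i \<subseteq> S 1" using chain[of 1 i] that by simp
    then show ?thesis using assms(5) by (rule subset_trans)
  qed
  have Sst: "S i \<in> st G" if "1 \<le> i" "i \<le> m" for i
    by (rule st_mono[OF assms(3) chain[OF that(1,2) order_refl] SV[OF that]])
  have red: "\<And>i. 1 \<le> i \<Longrightarrow> i \<le> m \<Longrightarrow> red_seq G S i = reduce (S i) G"
  proof -
    fix i show "1 \<le> i \<Longrightarrow> i \<le> m \<Longrightarrow> red_seq G S i = reduce (S i) G"
    proof (induction i)
      case 0 then show ?case by simp
    next
      case (Suc i)
      show ?case
      proof (cases "i = 0")
        case True then show ?thesis by simp
      next
        case False
        then have i: "1 \<le> i" "i \<le> m" using Suc.prems by auto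
        have "red_seq G S (Suc i) = reduce (S (Suc i)) (reduce (S i) G)"
          using Suc.IH[OF i] by simp
        also have "\<dots> = reduce (S (Suc i)) G"
          by (rule COMP[OF wf Sst[OF _ Suc.prems(2)] chain[OF i(1) _ Suc.prems(2)] SV[OF i]]) simp_all
        finally show ?thesis .
      qed
    qed
  qed
  have "induces_seq G S m"
    unfolding induces_seq_def
  proof (intro conjI allI impI)
    show "S 1 \<in> st G" using Sst assms(2) by simp
    fix i assume i: "1 \<le> i \<and> i \<le> m - 1"
    then have i1: "1 \<le> i" "i \<le> m" "Suc i \<le> m" by auto
    show "S (Suc i) \<in> st (red_seq G S i)"
      unfolding red[OF i1(1,2)]
      by (rule ST_R[OF wf Sst[OF _ i1(3)] chain[OF i1(1) _ i1(3)] SV[OF i1(1,2)]]) simp_all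
  qed
  then show ?thesis using red[OF assms(2) order_refl] by simp
qed

end
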